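(* Let $\Sigma$ be an alphabet and $n\ge 1$ a natural number. There exist $n$ nondeterministic finite automata $A_1,\dots,A_n$, each with six states, such that $P\big(L_m(A_1\|A_2\|\cdots\|A_n)\big)=\Sigma^{2^n-1}$. Here $P$ is the projection from the overall alphabet of $A_1\|\cdots\|A_n$ to $\Sigma$.
   Context: A nondeterministic finite automaton is $A=(Q,\Sigma,\delta,I,F)$ with transition function $\delta\colon Q\times\Sigma\to 2^Q$, nonempty set of initial states $I$, and set of marked states $F$. Its recognized (marked) language is $L_m(A)=\{w\mid \delta(I,w)\cap F\neq\emptyset\}$. The parallel composition $A_1\|\cdots\|A_n$ is the synchronous product, defined as follows. Its alphabet is the union of the alphabets, and its states are tuples of states. On an event, all components whose alphabet contains that event move simultaneously; the other components stay unchanged. The initial states are the tuples of initial states, and the marked states are the tuples of marked states. The projection $P$ onto $\Sigma$ is the morphism that erases events not in $\Sigma$ and keeps events in $\Sigma$. *)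

theory Defs
  imports Main
begin

record ('s, 'e) nfa =
  states :: "'s set"
  alph   :: "'e set"
  delta  :: "'s \<Rightarrow> 'e \<Rightarrow> 's set"
  init   :: "'s set"
  marked :: "'s set"

definition wf_nfa :: "('s, 'e) nfa \<Rightarrow> bool" where
  "wf_nfa A \<longleftrightarrow> finite (states A) \<and> finite (alph A)
     \<and> init A \<noteq> {} \<and> init A \<subseteq> states A \<and> marked A \<subseteq> states A
     \<and> (\<forall>q\<in>states A. \<forall>e\<in>alph A. delta A q e \<subseteq> states A)"

fun delta_ext :: "('s, 'e) nfa \<Rightarrow> 's set \<Rightarrow> 'e list \<Rightarrow> 's set" where
  "delta_ext A S [] = S"
| "delta_ext A S (e # w) = delta_ext A (\<Union>q\<in>S. delta A q e) w"

definition lang_m :: "('s, 'e) nfa \<Rightarrow> 'e list set" where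
  "lang_m A = {w. set w \<subseteq> alph A \<and> delta_ext A (init A) w \<inter> marked A \<noteq> {}}"

definition par_comp :: "('s, 'e) nfa list \<Rightarrow> ('s list, 'e) nfa" where
  "par_comp As = \<lparr>
     states = {qs. length qs = length As \<and> (\<forall>i<length As. qs ! i \<in> states (As ! i))},
     alph = (\<Union>i<length As. alph (As ! i)),
     delta = (\<lambda>qs e. {qs'. length qs' = length As \<and>
                (\<forall>i<length As. if e \<in> alph (As ! i)
                               then qs' ! i \<in> delta (As ! i) (qs ! i) e
                               else qs' ! i = qs ! i)}),
     init = {qs. length qs = length As \<and> (\<forall>i<length As. qs ! i \<in> init (As ! i))},
     marked = {qs. length qs = length As \<and> (\<forall>i<length As. qs ! i \<in> marked (As ! i))} \<rparr>"

text \<open>Events are of type 'a + nat: the alphabet Sigma is embedded via Inl, and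
  Inr provides an unlimited supply of further events.  The projection onto Sigma
  erases all events not in Inl ` Sigma.\<close>
definition proj :: "'a set \<Rightarrow> ('a + nat) list \<Rightarrow> 'a list" where
  "proj \<Sigma> w = concat (map (\<lambda>e. case e of Inl a \<Rightarrow> (if a \<in> \<Sigma> then [a] else []) | Inr _ \<Rightarrow> []) w)"

end

theory Submission
  imports Defs
begin

definition inp :: "'a set \<Rightarrow> nat \<Rightarrow> ('a + nat) set" where
  "inp S i = (if i = 0 then Inl ` S else {Inr i})"

definition aut :: "'a set \<Rightarrow> nat \<Rightarrow> nat \<Rightarrow> (nat, 'a + nat) nfa" where
  "aut S n i = \<lparr>states = {0..<6}, alph = inp S i \<union> {Inr (Suc i)},
     delta = (\<lambda>q e. if e \<in> inp S i \<and> q < 2 then {Suc q}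
                    else if e = Inr (Suc i) \<and> q = 2 \<and> Suc i < n then {0} else {}),
     init = {0}, marked = {1}\<rparr>"

definition PP :: "'a set \<Rightarrow> nat \<Rightarrow> (nat list, 'a + nat) nfa" where
  "PP S n = par_comp (map (aut S n) [0..<n])"

lemma delta_PP: "s' \<in> delta (PP S n) s e \<longleftrightarrow> length s' = n \<and>
   (\<forall>i<n. if e \<in> alph (aut S n i) then s' ! i \<in> delta (aut S n i) (s ! i) e else s' ! i = s ! i)"
  by (simp add: PP_def par_comp_def)

lemma alph_aut: "e \<in> alph (aut S n i) \<longleftrightarrow> e \<in> inp S i \<or> e = Inr (Suc i)"
  by (auto simp add: aut_def)

lemma delta_aut: "delta (aut S n i) q e = (if e \<in> inp S i \<and> q < 2 then {Suc q}
                    else if e = Inr (Suc i) \<and> q = 2 \<and> Suc i < n then {0} else {})"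
  by (simp add: aut_def)

lemma delta_ext_append: "delta_ext A S (u @ v) = delta_ext A (delta_ext A S u) v"
  by (induction u arbitrary: S) auto

lemma delta_ext_mono: "S \<subseteq> T \<Longrightarrow> delta_ext A S w \<subseteq> delta_ext A T w"
proof (induction w arbitrary: S T)
  case Nil then show ?case by simp
next
  case (Cons e w)
  have "(\<Union>q\<in>S. delta A q e) \<subseteq> (\<Union>q\<in>T. delta A q e)" using Cons.prems by blast
  then show ?case using Cons.IH by simp
qed

lemma reach_step: "s' \<in> delta A s e \<Longrightarrow> t \<in> delta_ext A {s'} w \<Longrightarrow> t \<in> delta_ext A {s} (e # w)"
  using delta_ext_mono[of "{s'}" "delta A s e" A w] by auto

lemma reach_trans: "t \<in> delta_ext A {s} u \<Longrightarrow> r \<in> delta_ext A {t} v \<Longrightarrow> r \<in> delta_ext A {s} (u @ v)"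
  using delta_ext_mono[of "{t}" "delta_ext A {s} u" A v] by (auto simp: delta_ext_append)

lemma step_inl: "0 < n \<Longrightarrow> a \<in> S \<Longrightarrow> length s = n \<Longrightarrow> s ! 0 < 2 \<Longrightarrow>
   s[0 := Suc (s ! 0)] \<in> delta (PP S n) s (Inl a)"
  by (auto simp: delta_PP alph_aut delta_aut inp_def nth_list_update)

lemma step_inr: "Suc j < n \<Longrightarrow> length s = n \<Longrightarrow> s ! j = 2 \<Longrightarrow> s ! Suc j < 2 \<Longrightarrow>
   s[j := 0, Suc j := Suc (s ! Suc j)] \<in> delta (PP S n) s (Inr (Suc j))"
  by (auto simp: delta_PP alph_aut delta_aut inp_def nth_list_update)

lemma carry_chain: "Suc (j + m) < n \<Longrightarrow> length r + Suc (Suc (j + m)) = n \<Longrightarrow>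
  replicate (Suc (j + m)) 0 @ 1 # r \<in> delta_ext (PP S n) {replicate j 0 @ 2 # replicate m 1 @ 0 # r}
     (map Inr [Suc j..<Suc (Suc (j + m))])"
proof (induction m arbitrary: j)
  case 0
  have "(replicate j 0 @ 2 # 0 # r)[j := 0, Suc j := Suc ((replicate j 0 @ 2 # 0 # r) ! Suc j)]
        = replicate (Suc j) 0 @ 1 # r"
    by (simp add: list_update_append nth_append replicate_append_same[symmetric])
  moreover have "(replicate j 0 @ 2 # 0 # r)[j := 0, Suc j := Suc ((replicate j 0 @ 2 # 0 # r) ! Suc j)]
     \<in> delta (PP S n) (replicate j 0 @ 2 # 0 # r) (Inr (Suc j))"
    using 0 by (intro step_inr) (auto simp: nth_append)
  ultimately show ?case by simp
next
  case (Suc m)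
  let ?s = "replicate j 0 @ 2 # replicate (Suc m) 1 @ 0 # r"
  have eq: "?s[j := 0, Suc j := Suc (?s ! Suc j)] = replicate (Suc j) 0 @ 2 # replicate m 1 @ 0 # r"
    by (simp add: list_update_append nth_append replicate_app_Cons_same del: replicate_Suc) simp
  have st: "?s[j := 0, Suc j := Suc (?s ! Suc j)] \<in> delta (PP S n) ?s (Inr (Suc j))"
    using Suc.prems by (intro step_inr) (auto simp: nth_append)
  have IH: "replicate (Suc (Suc j + m)) 0 @ 1 # r \<in> delta_ext (PP S n) {replicate (Suc j) 0 @ 2 # replicate m 1 @ 0 # r}
     (map Inr [Suc (Suc j)..<Suc (Suc (Suc j + m))])"
    using Suc.prems by (intro Suc.IH) auto
  have up: "[Suc j..<Suc (Suc (j + Suc m))] = Suc j # [Suc (Suc j)..<Suc (Suc (Suc j + m))]"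
    by (simp add: upt_conv_Cons)
  show ?case unfolding up using reach_step[OF st[unfolded eq] IH] by simp
qed


lemma carry: "k < n \<Longrightarrow> a \<in> S \<Longrightarrow> length r + Suc k = n \<Longrightarrow>
  replicate k 0 @ 1 # r \<in> delta_ext (PP S n) {replicate k 1 @ 0 # r} (Inl a # map Inr [1..<Suc k])"
proof (cases k)
  case 0
  assume "k < n" "a \<in> S" "length r + Suc k = n"
  then have "(0 # r)[0 := Suc ((0 # r) ! 0)] \<in> delta (PP S n) (0 # r) (Inl a)"
    using 0 by (intro step_inl) auto
  then show ?thesis using 0 reach_step[of _ "PP S n" _ _ _ "[]"] by simp
next
  case (Suc k')
  assume h: "k < n" "a \<in> S" "length r + Suc k = n"
  let ?s = "1 # replicate k' 1 @ 0 # r"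
  have st: "?s[0 := Suc (?s ! 0)] \<in> delta (PP S n) ?s (Inl a)"
    using h Suc by (intro step_inl) auto
  have cc: "replicate (Suc (0 + k')) 0 @ 1 # r \<in> delta_ext (PP S n) {replicate 0 0 @ 2 # replicate k' 1 @ 0 # r}
     (map Inr [Suc 0..<Suc (Suc (0 + k'))])"
    using h Suc by (intro carry_chain) auto
  have eq: "?s[0 := Suc (?s ! 0)] = replicate 0 0 @ 2 # replicate k' 1 @ 0 # r" by simp
  show ?thesis using reach_step[OF st[unfolded eq] cc] Suc by simp
qed

lemma alph_PP: "e \<in> alph (PP S n) \<longleftrightarrow> (\<exists>i<n. e \<in> alph (aut S n i))"
  by (auto simp: PP_def par_comp_def)

lemma count: "k \<le> n \<Longrightarrow> length r + k = n \<Longrightarrow> set v \<subseteq> S \<Longrightarrow> length v = 2 ^ k - 1 \<Longrightarrow>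
  \<exists>u. proj S u = v \<and> set u \<subseteq> alph (PP S n) \<and>
      replicate k 1 @ r \<in> delta_ext (PP S n) {replicate k 0 @ r} u"
proof (induction k arbitrary: r v)
  case 0
  then show ?case by (intro exI[of _ "[]"]) (simp add: proj_def)
next
  case (Suc k)
  define v1 where "v1 = take (2 ^ k - 1) v"
  define a where "a = v ! (2 ^ k - 1)"
  define v2 where "v2 = drop (2 ^ k) v"
  have pk: "(2::nat) ^ k \<ge> 1" by simp
  have len: "length v = 2 * 2 ^ k - 1" using Suc.prems by simp
  have vdec: "v = v1 @ a # v2"
  proof -
    have lt: "2 ^ k - 1 < length v" using len pk by linarith
    have "v = take (2 ^ k - 1) v @ drop (2 ^ k - 1) v" by simp
    also have "drop (2 ^ k - 1) v = v ! (2 ^ k - 1) # drop (Suc (2 ^ k - 1)) v"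
      using lt by (rule Cons_nth_drop_Suc[symmetric])
    finally show ?thesis unfolding v1_def a_def v2_def using pk by simp
  qed
  have l1: "length v1 = 2 ^ k - 1" "length v2 = 2 ^ k - 1" using len pk by (auto simp: v1_def v2_def)
  have aS: "a \<in> S" "set v1 \<subseteq> S" "set v2 \<subseteq> S" using Suc.prems(3) vdec by auto
  obtain u1 where u1: "proj S u1 = v1" "set u1 \<subseteq> alph (PP S n)"
    "replicate k 1 @ 0 # r \<in> delta_ext (PP S n) {replicate k 0 @ 0 # r} u1"
    using Suc.IH[of "0 # r" v1] Suc.prems l1 aS by auto
  obtain u2 where u2: "proj S u2 = v2" "set u2 \<subseteq> alph (PP S n)"
    "replicate k 1 @ 1 # r \<in> delta_ext (PP S n) {replicate k 0 @ 1 # r} u2"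
    using Suc.IH[of "1 # r" v2] Suc.prems l1 aS by auto
  let ?c = "Inl a # map Inr [1..<Suc k]"
  have c: "replicate k 0 @ 1 # r \<in> delta_ext (PP S n) {replicate k 1 @ 0 # r} ?c"
    using Suc.prems aS by (intro carry) auto
  have cset: "set ?c \<subseteq> alph (PP S n)"
  proof -
    have "Inl a \<in> alph (PP S n)" unfolding alph_PP using aS Suc.prems(1)
      by (intro exI[of _ 0]) (simp add: alph_aut inp_def)
    moreover have "Inr j \<in> alph (PP S n)" if "j \<in> {1..<Suc k}" for j
      unfolding alph_PP using that Suc.prems(1)
      by (intro exI[of _ j]) (simp add: alph_aut inp_def)
    ultimately show ?thesis by auto
  qed
  have pc: "proj S ?c = [a]" using aS by (simp add: proj_def)
  have r: "replicate k 1 @ 1 # r \<in> delta_ext (PP S n) {replicate k 0 @ 0 # r} (u1 @ ?c @ u2)"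
    using reach_trans[OF u1(3) reach_trans[OF c u2(3)]] .
  show ?case
  proof (intro exI conjI)
    show "proj S (u1 @ ?c @ u2) = v" using u1 u2 pc vdec by (simp add: proj_def)
    show "set (u1 @ ?c @ u2) \<subseteq> alph (PP S n)" using u1 u2 cset by auto
    show "replicate (Suc k) 1 @ r \<in> delta_ext (PP S n) {replicate (Suc k) 0 @ r} (u1 @ ?c @ u2)"
    proof -
      have e1: "replicate k (1::nat) @ 1 # r = replicate (Suc k) 1 @ r" by (simp add: replicate_app_Cons_same)
      have e0: "replicate k (0::nat) @ 0 # r = replicate (Suc k) 0 @ r" by (simp add: replicate_app_Cons_same)
      show ?thesis using r unfolding e1 e0 .
    qed
  qed
qed


definition wt :: "nat \<Rightarrow> nat \<Rightarrow> nat" where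
  "wt i q = (if q = 1 then 2 ^ i else if q = 2 then 2 ^ Suc i else 0)"

definition W :: "nat \<Rightarrow> nat list \<Rightarrow> nat" where
  "W n s = (\<Sum>i<n. wt i (s ! i))"

lemma sum_two: "finite A \<Longrightarrow> k \<in> A \<Longrightarrow> l \<in> A \<Longrightarrow> k \<noteq> l \<Longrightarrow> sum f A = f k + f l + sum f (A - {k, l})"
proof -
  assume a: "finite A" "k \<in> A" "l \<in> A" "k \<noteq> l"
  have "sum f A = f k + sum f (A - {k})" using a by (intro sum.remove) auto
  also have "sum f (A - {k}) = f l + sum f (A - {k} - {l})" using a by (intro sum.remove) auto
  also have "A - {k} - {l} = A - {k, l}" by auto
  finally show ?thesis by (simp add: add.assoc)
qed

lemma W_step:
  assumes n: "0 < n" and ls: "length s = n" and st: "s' \<in> delta (PP S n) s e"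
  shows "W n s' = W n s + length (proj S [e])"
proof -
  have H: "\<And>i. i < n \<Longrightarrow> (if e \<in> alph (aut S n i) then s' ! i \<in> delta (aut S n i) (s ! i) e else s' ! i = s ! i)"
    using st by (simp add: delta_PP)
  show ?thesis
  proof (cases "\<exists>i<n. e \<in> alph (aut S n i)")
    case False
    then have "\<And>i. i < n \<Longrightarrow> s' ! i = s ! i" using H by metis
    then have "W n s' = W n s" by (simp add: W_def)
    moreover have "proj S [e] = []"
      using False n by (cases e) (auto simp: proj_def alph_aut inp_def split: if_splits)
    ultimately show ?thesis by simp
  next
    case True
    then obtain i where i: "i < n" "e \<in> alph (aut S n i)" by blast
    show ?thesis
    proof (cases e)
      case (Inl a)
      then have aS: "a \<in> S" and i0: "i = 0" using i by (auto simp: alph_aut inp_def split: if_splits)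
      have oth: "\<And>i. i < n \<Longrightarrow> i \<noteq> 0 \<Longrightarrow> s' ! i = s ! i" using H Inl by (simp add: alph_aut inp_def)
      have z: "s ! 0 < 2" "s' ! 0 = Suc (s ! 0)" using H[OF n] Inl aS
        by (auto simp: alph_aut inp_def delta_aut split: if_splits)
      have wz: "wt 0 (s' ! 0) = wt 0 (s ! 0) + 1" using z by (cases "s ! 0") (auto simp: wt_def)
      have "W n s' = wt 0 (s' ! 0) + (\<Sum>i\<in>{..<n} - {0}. wt i (s' ! i))"
        unfolding W_def using n by (intro sum.remove) auto
      also have "(\<Sum>i\<in>{..<n} - {0}. wt i (s' ! i)) = (\<Sum>i\<in>{..<n} - {0}. wt i (s ! i))"
        using oth by (intro sum.cong) auto
      also have "W n s = wt 0 (s ! 0) + (\<Sum>i\<in>{..<n} - {0}. wt i (s ! i))"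
        unfolding W_def using n by (intro sum.remove) auto
      ultimately show ?thesis using wz Inl aS by (simp add: proj_def)
    next
      case (Inr j)
      then obtain k where jk: "j = Suc k" "k < n"
        using i Inr by (cases j) (auto simp: alph_aut inp_def split: if_splits)
      have hk: "s ! k = 2" "Suc k < n" "s' ! k = 0" using H[OF jk(2)] Inr jk
        by (auto simp: alph_aut inp_def delta_aut split: if_splits)
      have hk1: "s ! Suc k < 2" "s' ! Suc k = Suc (s ! Suc k)" using H[OF hk(2)] Inr jk
        by (auto simp: alph_aut inp_def delta_aut split: if_splits)
      have oth: "\<And>i. i < n \<Longrightarrow> i \<noteq> k \<Longrightarrow> i \<noteq> Suc k \<Longrightarrow> s' ! i = s ! i"
      proof -
        fix i assume a: "i < n" "i \<noteq> k" "i \<noteq> Suc k"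
        then have "e \<notin> alph (aut S n i)" using Inr jk by (auto simp: alph_aut inp_def)
        then show "s' ! i = s ! i" using H[OF a(1)] by simp
      qed
      have w1: "wt (Suc k) (s' ! Suc k) = wt (Suc k) (s ! Suc k) + 2 ^ Suc k"
        using hk1 by (cases "s ! Suc k") (auto simp: wt_def)
      have w0: "wt k (s ! k) = 2 ^ Suc k" "wt k (s' ! k) = 0" using hk by (auto simp: wt_def)
      have "W n s' = wt k (s' ! k) + wt (Suc k) (s' ! Suc k) + (\<Sum>i\<in>{..<n} - {k, Suc k}. wt i (s' ! i))"
        unfolding W_def using hk by (intro sum_two) auto
      also have "(\<Sum>i\<in>{..<n} - {k, Suc k}. wt i (s' ! i)) = (\<Sum>i\<in>{..<n} - {k, Suc k}. wt i (s ! i))"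
        using oth by (intro sum.cong) auto
      also have "W n s = wt k (s ! k) + wt (Suc k) (s ! Suc k) + (\<Sum>i\<in>{..<n} - {k, Suc k}. wt i (s ! i))"
        unfolding W_def using hk by (intro sum_two) auto
      ultimately show ?thesis using w1 w0 Inr by (simp add: proj_def)
    qed
  qed
qed

lemma len_step: "s' \<in> delta (PP S n) s e \<Longrightarrow> length s' = n"
  by (simp add: delta_PP)

lemma invariant: "0 < n \<Longrightarrow> (\<And>s. s \<in> T \<Longrightarrow> length s = n \<and> W n s = c) \<Longrightarrow> t \<in> delta_ext (PP S n) T w \<Longrightarrow>
   length t = n \<and> W n t = c + length (proj S w)"
proof (induction w arbitrary: T c)
  case Nil then show ?case by (simp add: proj_def)
next
  case (Cons e w)
  let ?T = "\<Union>q\<in>T. delta (PP S n) q e"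
  have "\<And>s. s \<in> ?T \<Longrightarrow> length s = n \<and> W n s = c + length (proj S [e])"
    using Cons.prems W_step len_step by blast
  then have "length t = n \<and> W n t = c + length (proj S [e]) + length (proj S w)"
    using Cons.IH[of ?T] Cons.prems by simp
  moreover have "length (proj S (e # w)) = length (proj S [e]) + length (proj S w)"
    by (simp add: proj_def)
  ultimately show ?case by simp
qed

lemma sum_pow2: "(\<Sum>i<n. (2::nat) ^ i) + 1 = 2 ^ n"
  by (induction n) auto


theorem lemma8:
  fixes \<Sigma> :: "'a set" and n :: nat
  assumes "finite \<Sigma>" and "\<Sigma> \<noteq> {}" and "n \<ge> 1"
  shows "\<exists>As :: (nat, 'a + nat) nfa list.
           length As = n
         \<and> (\<forall>A\<in>set As. wf_nfa A \<and> card (states A) = 6)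
         \<and> proj \<Sigma> ` lang_m (par_comp As) = {w. set w \<subseteq> \<Sigma> \<and> length w = 2 ^ n - 1}"
proof (intro exI[of _ "map (aut \<Sigma> n) [0..<n]"] conjI)
  show "length (map (aut \<Sigma> n) [0..<n]) = n" by simp
  show "\<forall>A\<in>set (map (aut \<Sigma> n) [0..<n]). wf_nfa A \<and> card (states A) = 6"
    using assms(1) by (auto simp: wf_nfa_def aut_def inp_def)
  have n0: "0 < n" using assms(3) by simp
  have P: "par_comp (map (aut \<Sigma> n) [0..<n]) = PP \<Sigma> n" by (simp add: PP_def)
  have initP: "init (PP \<Sigma> n) = {replicate n 0}"
    by (auto simp: PP_def par_comp_def aut_def intro: nth_equalityI)
  have markP: "marked (PP \<Sigma> n) = {replicate n 1}"
    by (auto simp: PP_def par_comp_def aut_def intro: nth_equalityI)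
  show "proj \<Sigma> ` lang_m (par_comp (map (aut \<Sigma> n) [0..<n])) = {w. set w \<subseteq> \<Sigma> \<and> length w = 2 ^ n - 1}"
    unfolding P
  proof
    show "proj \<Sigma> ` lang_m (PP \<Sigma> n) \<subseteq> {w. set w \<subseteq> \<Sigma> \<and> length w = 2 ^ n - 1}"
    proof
      fix v assume "v \<in> proj \<Sigma> ` lang_m (PP \<Sigma> n)"
      then obtain w where w: "v = proj \<Sigma> w" "replicate n 1 \<in> delta_ext (PP \<Sigma> n) {replicate n 0} w"
        by (auto simp: lang_m_def initP markP)
      have W0: "W n (replicate n 0) = 0" by (simp add: W_def wt_def)
      have "W n (replicate n 1) = 0 + length (proj \<Sigma> w)"
        using invariant[OF n0, of "{replicate n 0}" 0 _ \<Sigma> w] w(2) W0 by auto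
      moreover have "W n (replicate n 1) = (\<Sum>i<n. (2::nat) ^ i)" by (simp add: W_def wt_def)
      ultimately have "length v = 2 ^ n - 1" using sum_pow2[of n] w(1) by simp
      moreover have "set v \<subseteq> \<Sigma>" unfolding w(1) proj_def by (auto split: sum.splits if_splits)
      ultimately show "v \<in> {w. set w \<subseteq> \<Sigma> \<and> length w = 2 ^ n - 1}" by simp
    qed
    show "{w. set w \<subseteq> \<Sigma> \<and> length w = 2 ^ n - 1} \<subseteq> proj \<Sigma> ` lang_m (PP \<Sigma> n)"
    proof
      fix v assume "v \<in> {w. set w \<subseteq> \<Sigma> \<and> length w = 2 ^ n - 1}"
      then obtain u where u: "proj \<Sigma> u = v" "set u \<subseteq> alph (PP \<Sigma> n)"
        "replicate n 1 @ [] \<in> delta_ext (PP \<Sigma> n) {replicate n 0 @ []} u"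
        using count[of n n "[]" v \<Sigma>] by auto
      have "u \<in> lang_m (PP \<Sigma> n)" using u(2,3) by (auto simp: lang_m_def initP markP)
      then show "v \<in> proj \<Sigma> ` lang_m (PP \<Sigma> n)" using u(1) by blast
    qed
  qed
qed

end
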